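(* Let $a_{01},a_{10}>0$, $a_\triangle=a_{01}+a_{10}$, and let $x_\triangle\ge0$ be a fixed integer (prior swing count). Let $h(k\mid m,\theta)=\binom{m}{k}\theta^k(1-\theta)^{m-k}$, and let $p_H(\theta)=\mathrm{Beta}(\theta\mid a_{01},a_{10})$. Define the conditionally-intrinsic prior $$p^{CI}_H(\theta\mid H_0)=p_H(\theta)\,E_\theta\!\left[\frac{h(x_{01}\mid x_\triangle,1/2)}{\int_0^1h(x_{01}\mid x_\triangle,t)p_H(t)\,dt}\right],$$ the expectation being over $x_{01}\sim h(\cdot\mid x_\triangle,\theta)$. Let observed data consist of integers $0\le n_{01}\le n_\triangle$, and define $m^{Co}_{H_0}(n)=h(n_{01}\mid n_\triangle,1/2)$, $m^{CI}_H(n)=\int_0^1h(n_{01}\mid n_\triangle,\theta)p^{CI}_H(\theta\mid H_0)\,d\theta$ and $BF^{CI}_{H,H_0}(n)=m^{CI}_H(n)/m^{Co}_{H_0}(n)$. Then $$BF^{CI}_{H,H_0}(n)=\sum_{x_{01}=0}^{x_\triangle}\binom{x_\triangle}{x_{01}}\left(\frac12\right)^{x_\triangle}BF^{Co}_{H,H_0}(n\mid x),$$ where $$BF^{Co}_{H,H_0}(n\mid x)=2^{n_\triangle}\,\frac{B\big(a_{01}+x_{01}+n_{01},\,a_\triangle-a_{01}+x_\triangle-x_{01}+n_\triangle-n_{01}\big)}{B\big(a_{01}+x_{01},\,a_\triangle-a_{01}+x_\triangle-x_{01}\big)}.$$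
   Context: $B(A,B)=\int_0^1t^{A-1}(1-t)^{B-1}dt$ is the Beta function and $\mathrm{Beta}(\theta\mid A,B)=\theta^{A-1}(1-\theta)^{B-1}/B(A,B)$ the Beta density. $H$ is the hypothesis $\theta\neq1/2$ and $H_0$ the hypothesis $\theta=1/2$, where $\theta$ is the success probability in the binomial model $h(n_{01}\mid n_\triangle,\theta)$ for the number $n_{01}$ of $0\to1$ swings among $n_\triangle$ total swings in a matched-pair $2\times2$ table. *)

theory Defs
  imports "HOL-Analysis.Analysis"
begin

definition binom_lik :: "nat \<Rightarrow> nat \<Rightarrow> real \<Rightarrow> real" where
  "binom_lik k m \<theta> = real (m choose k) * \<theta> ^ k * (1 - \<theta>) ^ (m - k)"

definition beta_dens :: "real \<Rightarrow> real \<Rightarrow> real \<Rightarrow> real" where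
  "beta_dens A B \<theta> = \<theta> powr (A - 1) * (1 - \<theta>) powr (B - 1) / Beta A B"

definition prior_pred :: "real \<Rightarrow> real \<Rightarrow> nat \<Rightarrow> nat \<Rightarrow> real" where
  "prior_pred a01 a10 xt x01 = integral {0..1} (\<lambda>t. binom_lik x01 xt t * beta_dens a01 a10 t)"

text \<open>Conditionally-intrinsic prior; the expectation over x01 ~ h(. | xt, theta)
  is written out as the finite sum over its support {0..xt}.\<close>
definition pCI :: "real \<Rightarrow> real \<Rightarrow> nat \<Rightarrow> real \<Rightarrow> real" where
  "pCI a01 a10 xt \<theta> = beta_dens a01 a10 \<theta> *
     (\<Sum>x01 = 0..xt. binom_lik x01 xt \<theta> *
        (binom_lik x01 xt (1/2) / prior_pred a01 a10 xt x01))"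

definition m_Co_H0 :: "nat \<Rightarrow> nat \<Rightarrow> real" where
  "m_Co_H0 n01 nt = binom_lik n01 nt (1/2)"

definition m_CI_H :: "real \<Rightarrow> real \<Rightarrow> nat \<Rightarrow> nat \<Rightarrow> nat \<Rightarrow> real" where
  "m_CI_H a01 a10 xt n01 nt = integral {0..1} (\<lambda>\<theta>. binom_lik n01 nt \<theta> * pCI a01 a10 xt \<theta>)"

definition BF_CI :: "real \<Rightarrow> real \<Rightarrow> nat \<Rightarrow> nat \<Rightarrow> nat \<Rightarrow> real" where
  "BF_CI a01 a10 xt n01 nt = m_CI_H a01 a10 xt n01 nt / m_Co_H0 n01 nt"

text \<open>BF^Co(n | x), with a_tri = a01 + a10.\<close>
definition BF_Co :: "real \<Rightarrow> real \<Rightarrow> nat \<Rightarrow> nat \<Rightarrow> nat \<Rightarrow> nat \<Rightarrow> real" where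
  "BF_Co a01 a10 xt x01 n01 nt =
     2 ^ nt * Beta (a01 + real x01 + real n01)
                   ((a01 + a10) - a01 + real xt - real x01 + real nt - real n01)
            / Beta (a01 + real x01) ((a01 + a10) - a01 + real xt - real x01)"

end

theory Submission
  imports Defs
begin

lemma Beta_pos_real: "a > 0 \<Longrightarrow> b > 0 \<Longrightarrow> Beta a b > (0::real)"
  unfolding Beta_def by (simp add: Gamma_real_pos)

lemma beta_moment:
  fixes a b :: real and k j :: nat
  assumes a: "a > 0" and b: "b > 0"
  shows "((\<lambda>t. t ^ k * (1 - t) ^ j * (t powr (a - 1) * (1 - t) powr (b - 1)))
          has_integral Beta (a + real k) (b + real j)) {0..1}"
proof -
  have h: "((\<lambda>t. t powr (a + real k - 1) * (1 - t) powr (b + real j - 1))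
          has_integral Beta (a + real k) (b + real j)) {0<..<1}"
    using has_integral_Beta_real[of "a + real k" "b + real j"] a b
    by (simp add: has_integral_Icc_iff_Ioo)
  have eq: "t ^ k * (1 - t) ^ j * (t powr (a - 1) * (1 - t) powr (b - 1)) =
        t powr (a + real k - 1) * (1 - t) powr (b + real j - 1)" if "t \<in> {0<..<1}" for t :: real
  proof -
    from that have t0: "t > 0" and t1: "1 - t > 0" by auto
    have "t powr (a + real k - 1) = t ^ k * t powr (a - 1)"
      using t0 by (simp add: powr_add[symmetric] powr_realpow[symmetric] algebra_simps)
    moreover have "(1 - t) powr (b + real j - 1) = (1 - t) ^ j * (1 - t) powr (b - 1)"
      using t1 by (simp add: powr_add[symmetric] powr_realpow[symmetric] algebra_simps)
    ultimately show ?thesis by simp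
  qed
  have "((\<lambda>t. t ^ k * (1 - t) ^ j * (t powr (a - 1) * (1 - t) powr (b - 1)))
          has_integral Beta (a + real k) (b + real j)) {0<..<1}"
    using h by (rule has_integral_eq[rotated]) (use eq in auto)
  then show ?thesis by (simp add: has_integral_Icc_iff_Ioo)
qed

lemma half_lik: "x \<le> m \<Longrightarrow> binom_lik x m (1/2) = real (m choose x) * (1/2) ^ m"
  unfolding binom_lik_def by (simp add: power_add[symmetric])

lemma prior_pred_eq:
  assumes a: "a > 0" and b: "b > 0" and x: "x \<le> m"
  shows "prior_pred a b m x = real (m choose x) * Beta (a + real x) (b + real (m - x)) / Beta a b"
proof -
  have "((\<lambda>t. (real (m choose x) / Beta a b) *
          (t ^ x * (1 - t) ^ (m - x) * (t powr (a - 1) * (1 - t) powr (b - 1))))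
     has_integral (real (m choose x) / Beta a b) * Beta (a + real x) (b + real (m - x))) {0..1}"
    by (intro has_integral_mult_right beta_moment a b)
  moreover have "(\<lambda>t. binom_lik x m t * beta_dens a b t) = (\<lambda>t. (real (m choose x) / Beta a b) *
          (t ^ x * (1 - t) ^ (m - x) * (t powr (a - 1) * (1 - t) powr (b - 1))))"
    by (auto simp: binom_lik_def beta_dens_def fun_eq_iff)
  ultimately show ?thesis unfolding prior_pred_def
    by (metis (no_types, lifting) integral_unique times_divide_eq_left)
qed

theorem proposition6:
  fixes a01 a10 :: real and xt n01 nt :: nat
  assumes "a01 > 0" and "a10 > 0" and "n01 \<le> nt"
  shows "BF_CI a01 a10 xt n01 nt =
    (\<Sum>x01 = 0..xt. real (xt choose x01) * (1/2) ^ xt * BF_Co a01 a10 xt x01 n01 nt)"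
proof -
  define B where "B = Beta a01 a10"
  have Bp: "B > 0" unfolding B_def using assms by (simp add: Beta_pos_real)
  define c where "c x = real (nt choose n01) / B * binom_lik x xt (1/2) / prior_pred a01 a10 xt x
      * real (xt choose x)" for x
  define g where "g x t = t ^ n01 * t ^ x * ((1 - t) ^ (nt - n01) * (1 - t) ^ (xt - x)) *
      (t powr (a01 - 1) * (1 - t) powr (a10 - 1))" for x and t :: real
  have gg: "g x = (\<lambda>t. t ^ (n01 + x) * (1 - t) ^ (nt - n01 + (xt - x)) *
      (t powr (a01 - 1) * (1 - t) powr (a10 - 1)))" for x
    unfolding g_def by (simp add: power_add fun_eq_iff)
  have integrand: "binom_lik n01 nt t * pCI a01 a10 xt t = (\<Sum>x = 0..xt. c x * g x t)" for t
    unfolding pCI_def binom_lik_def c_def g_def beta_dens_def B_def sum_distrib_left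
    by (rule sum.cong) (simp_all add: field_simps)
  have "((\<lambda>t. \<Sum>x = 0..xt. c x * g x t) has_integral
       (\<Sum>x = 0..xt. c x * Beta (a01 + real (n01 + x)) (a10 + real (nt - n01 + (xt - x))))) {0..1}"
    unfolding gg
    by (intro has_integral_sum has_integral_mult_right beta_moment assms) auto
  hence mCI: "m_CI_H a01 a10 xt n01 nt =
      (\<Sum>x = 0..xt. c x * Beta (a01 + real (n01 + x)) (a10 + real (nt - n01 + (xt - x))))"
    unfolding m_CI_H_def integrand by (rule integral_unique)
  have mCo: "m_Co_H0 n01 nt = real (nt choose n01) * (1/2) ^ nt"
    unfolding m_Co_H0_def using assms(3) by (rule half_lik)
  have Cp: "real (nt choose n01) > 0" using assms(3) by simp
  show ?thesis
    unfolding BF_CI_def mCI mCo sum_divide_distrib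
  proof (rule sum.cong[OF refl])
    fix x assume "x \<in> {0..xt}"
    hence xle: "x \<le> xt" by simp
    have Cx: "real (xt choose x) > 0" using xle by simp
    have Bx: "Beta (a01 + real x) (a10 + real (xt - x)) > 0"
      using assms by (intro Beta_pos_real) auto
    have pp: "prior_pred a01 a10 xt x = real (xt choose x) * Beta (a01 + real x) (a10 + real (xt - x)) / B"
      unfolding B_def using prior_pred_eq[OF assms(1,2) xle] .
    have e1: "a01 + real (n01 + x) = a01 + real x + real n01" by simp
    have e2: "a10 + real (nt - n01 + (xt - x)) = a01 + a10 - a01 + real xt - real x + real nt - real n01"
      using xle assms(3) by (simp add: of_nat_diff)
    have e3: "a10 + real (xt - x) = a01 + a10 - a01 + real xt - real x"
      using xle by (simp add: of_nat_diff)
    show "c x * Beta (a01 + real (n01 + x)) (a10 + real (nt - n01 + (xt - x))) /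
        (real (nt choose n01) * (1 / 2) ^ nt) =
        real (xt choose x) * (1 / 2) ^ xt * BF_Co a01 a10 xt x n01 nt"
      unfolding c_def BF_Co_def pp half_lik[OF xle] e1 e2 e3[symmetric]
      using Bp Cp Cx Bx by (simp add: field_simps power_one_over)
  qed
qed

end
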